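(* Let $n$ be a positive integer. Then $\mathcal{L}_n \subseteq \mathcal{M}_n$. Moreover, every $\alpha \in \mathcal{L}_n$ can be realized as $\alpha = \mu_n(\xi,\xi')$ for some reals $\xi \neq \xi'$ for which the supremum defining $\mu_n(\xi,\xi')$ is attained at some $(s,t) \in \mathbb{Z}^2\setminus\{0\}$.
   Context: For an irrational real $\xi$ and positive integer $n$, $\lambda_n(\xi) = \limsup_{s/t \to \xi} \dfrac{\gcd(t,n)}{t^2 \left| \frac{s}{t} - \xi\right|}$ (limsup over rationals $s/t$, $t>0$, tending to $\xi$), and $\mathcal{L}_n = \{\lambda_n(\xi)\in\mathbb{R} : \xi\in\mathbb{R}\setminus\mathbb{Q}\}$. For reals $\xi\ne\xi'$, $\mu_n(\xi,\xi') = \sup_{(s,t)\in\mathbb{Z}^2\setminus\{0\}} \dfrac{\gcd(t,n)\,|\xi-\xi'|}{|s-t\xi|\,|s-t\xi'|}$ (with $\gcd(0,n)=n$), and $\mathcal{M}_n$ is the set of finite values of $\mu_n(\xi,\xi')$ over pairs of reals $\xi\neq\xi'$. *)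

theory Defs
  imports "HOL-Analysis.Analysis"
begin

definition lam_term :: "nat \<Rightarrow> real \<Rightarrow> int \<Rightarrow> int \<Rightarrow> ereal" where
  "lam_term n \<xi> s t =
     (if real_of_int s / real_of_int t = \<xi> then \<infinity>
      else ereal (real_of_int (gcd t (int n)) /
                  ((real_of_int t)^2 * \<bar>real_of_int s / real_of_int t - \<xi>\<bar>)))"

text \<open>lambda_n(xi) = limsup of lam_term over pairs (s,t), t > 0, with s/t tending to xi
  (s/t \<noteq> xi), written out as inf over eps of sup over the punctured eps-neighbourhood.\<close>
definition lambda_n :: "nat \<Rightarrow> real \<Rightarrow> ereal" where
  "lambda_n n \<xi> =
     (INF \<epsilon>\<in>{0<..}. SUP p\<in>{(s,t). t > 0 \<and>
                     0 < \<bar>real_of_int s / real_of_int t - \<xi>\<bar> \<and>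
                     \<bar>real_of_int s / real_of_int t - \<xi>\<bar> < \<epsilon>}.
                lam_term n \<xi> (fst p) (snd p))"

definition L_n :: "nat \<Rightarrow> real set" where
  "L_n n = {\<alpha>. \<exists>\<xi>. \<xi> \<notin> \<rat> \<and> lambda_n n \<xi> = ereal \<alpha>}"

text \<open>gcd(t,n)|xi - xi'| / (|s - t xi| |s - t xi'|); a zero denominator gives infinity.
  Note gcd 0 n = n in Isabelle, matching the convention gcd(0,n) = n.\<close>
definition mu_term :: "nat \<Rightarrow> real \<Rightarrow> real \<Rightarrow> int \<Rightarrow> int \<Rightarrow> ereal" where
  "mu_term n \<xi> \<xi>' s t =
     (let d = \<bar>real_of_int s - real_of_int t * \<xi>\<bar> * \<bar>real_of_int s - real_of_int t * \<xi>'\<bar>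
      in if d = 0 then \<infinity>
         else ereal (real_of_int (gcd t (int n)) * \<bar>\<xi> - \<xi>'\<bar> / d))"

definition mu_n :: "nat \<Rightarrow> real \<Rightarrow> real \<Rightarrow> ereal" where
  "mu_n n \<xi> \<xi>' = (SUP p\<in>{p::int\<times>int. p \<noteq> (0,0)}. mu_term n \<xi> \<xi>' (fst p) (snd p))"

definition M_n :: "nat \<Rightarrow> real set" where
  "M_n n = {\<alpha>. \<exists>\<xi> \<xi>'. \<xi> \<noteq> \<xi>' \<and> mu_n n \<xi> \<xi>' = ereal \<alpha>}"

end

theory Submission
  imports Defs "HOL-Analysis.Kronecker_Approximation_Theorem"
begin

lemma crt_coprime:
  fixes a0 m g :: int
  assumes cop: "coprime a0 m" and g: "g > 0"
  shows "\<exists>k. coprime (a0 + k*m) g"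
proof -
  define P where "P = {p \<in> prime_factors g. \<not> p dvd a0}"
  have fin: "finite P" unfolding P_def by auto
  define k where "k = \<Prod>P"
  have "coprime (a0 + k*m) g"
  proof (rule ccontr)
    assume nc: "\<not> coprime (a0 + k*m) g"
    have "gcd (a0+k*m) g \<noteq> 0" using g by simp
    moreover have "\<not> is_unit (gcd (a0+k*m) g)" using nc is_unit_gcd by blast
    ultimately obtain p where "prime p" "p dvd gcd (a0+k*m) g"
      using prime_divisor_exists by blast
    then have p: "prime p" "p dvd a0 + k*m" "p dvd g" by auto
    show False
    proof (cases "p dvd a0")
      case True
      have "\<not> p dvd m"
      proof
        assume "p dvd m"
        then have "is_unit p" using coprime_common_divisor[OF cop True] by blast
        then show False using p(1) not_prime_unit by blast
      qed
      moreover have "\<not> p dvd k"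
      proof
        assume "p dvd k"
        then obtain q where q: "q \<in> P" "p dvd q"
          by (auto simp: k_def prime_dvd_prod_iff[OF fin p(1)])
        have pq: "prime q" using q(1) unfolding P_def by (simp add: in_prime_factors_iff)
        have "p = q" using primes_dvd_imp_eq[OF p(1) pq q(2)] .
        then show False using q(1) True unfolding P_def by simp
      qed
      ultimately have "\<not> p dvd k*m" by (simp add: prime_dvd_mult_iff[OF p(1)])
      moreover have "p dvd k*m" using True p(2) dvd_add_right_iff by blast
      ultimately show False by blast
    next
      case False
      have "p \<in> P" unfolding P_def using False p g
        by (simp add: in_prime_factors_iff)
      then have "p dvd k" unfolding k_def using fin by (simp add: dvd_prod_eqI)
      then have "p dvd k*m" by simp
      then have "p dvd a0" using p(2) dvd_add_left_iff by blast
      then show False using False by blast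
    qed
  qed
  then show ?thesis by blast
qed

lemma real_bounds:
  fixes x y a b c d u g n \<xi> B :: real
  assumes y: "y > 0" and g1: "g \<ge> 1" and gn: "g \<le> n" and u0: "0 \<le> u" and ug: "u < g"
    and det: "a*d - b*c = 1" and ex: "u*a + g*c = x" and ey: "u*b + g*d = y"
    and bl: "n*y \<le> b" and bu: "b \<le> 3*n*y"
    and CB: "\<bar>x - y*\<xi>\<bar> \<le> B / y" and B0: "B \<ge> 0"
    and AC: "\<bar>a - b*\<xi>\<bar> \<ge> \<bar>x - y*\<xi>\<bar> / 2" and C0: "x - y*\<xi> \<noteq> 0"
  shows "\<bar>a - b*\<xi>\<bar> \<le> (n + 3*n*B) / y"
    and "\<bar>a - b*\<xi>\<bar> * b \<le> 3*n*(n + 3*n*B)"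
    and "\<bar>c - d*\<xi>\<bar> \<le> (n+2) * \<bar>a - b*\<xi>\<bar>"
    and "\<bar>d\<bar> \<le> (n+1) * b"
    and "a - b*\<xi> \<noteq> 0"
proof -
  define A where "A = a - b*\<xi>"
  define C where "C = x - y*\<xi>"
  define C2 where "C2 = c - d*\<xi>"
  have gpos: "g > 0" using g1 by simp
  have n1: "n \<ge> 1" using g1 gn by simp
  have yaxb: "y*a - x*b = g"
  proof -
    have "y*a - x*b = (u*b + g*d)*a - (u*a + g*c)*b" using ex ey by simp
    also have "\<dots> = g*(a*d - b*c)" by (simp add: algebra_simps)
    finally show ?thesis using det by simp
  qed
  have Aeq: "A = (g + b*C)/y"
  proof -
    have "y*A = g + b*C" unfolding A_def C_def using yaxb by (simp add: algebra_simps)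
    then show ?thesis using y by (simp add: field_simps)
  qed
  have b0: "b \<ge> 0" using bl n1 y by (meson dual_order.trans mult_nonneg_nonneg less_imp_le zero_le_one)
  have bC: "b * \<bar>C\<bar> \<le> 3*n*B"
  proof -
    have "b * \<bar>C\<bar> \<le> (3*n*y) * (B/y)" using bu CB b0 unfolding C_def
      by (intro mult_mono) auto
    also have "\<dots> = 3*n*B" using y by simp
    finally show ?thesis .
  qed
  have Ab: "\<bar>A\<bar> \<le> (n + 3*n*B)/y"
  proof -
    have "\<bar>g + b*C\<bar> \<le> g + b*\<bar>C\<bar>" using gpos b0 by (simp add: abs_mult abs_triangle_ineq order_trans[OF abs_triangle_ineq])
    also have "\<dots> \<le> n + 3*n*B" using gn bC by simp
    finally have "\<bar>g + b*C\<bar> \<le> n + 3*n*B" .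
    then show ?thesis unfolding Aeq using y by (simp add: divide_right_mono)
  qed
  then show "\<bar>a - b*\<xi>\<bar> \<le> (n + 3*n*B) / y" unfolding A_def .
  have "\<bar>A\<bar> * b \<le> ((n + 3*n*B)/y) * (3*n*y)"
    using Ab bu b0 by (intro mult_mono) auto
  also have "\<dots> = 3*n*(n + 3*n*B)" using y by simp
  finally show "\<bar>a - b*\<xi>\<bar> * b \<le> 3*n*(n + 3*n*B)" unfolding A_def .
  have "u*A + g*C2 = (u*a+g*c) - (u*b+g*d)*\<xi>" unfolding A_def C2_def by (simp add: algebra_simps)
  then have ugC: "u*A + g*C2 = C" unfolding C_def using ex ey by simp
  have "g*\<bar>C2\<bar> \<le> \<bar>C\<bar> + u*\<bar>A\<bar>"
  proof -
    have "C - u*A = g*C2" using ugC by simp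
    then have "\<bar>C - u*A\<bar> = g*\<bar>C2\<bar>" using gpos by (simp add: abs_mult)
    then have "g*\<bar>C2\<bar> = \<bar>C - u*A\<bar>" by simp
    also have "\<dots> \<le> \<bar>C\<bar> + \<bar>u*A\<bar>" by (rule abs_triangle_ineq4)
    also have "\<bar>u*A\<bar> = u*\<bar>A\<bar>" using u0 by (simp add: abs_mult)
    finally show ?thesis .
  qed
  also have "\<dots> \<le> 2*\<bar>A\<bar> + n*\<bar>A\<bar>"
  proof -
    have "\<bar>C\<bar> \<le> 2*\<bar>A\<bar>" using AC unfolding A_def C_def by simp
    moreover have "u*\<bar>A\<bar> \<le> n*\<bar>A\<bar>" using ug gn by (intro mult_right_mono) auto
    ultimately show ?thesis by linarith
  qed
  finally have "g*\<bar>C2\<bar> \<le> (n+2)*\<bar>A\<bar>" by (simp add: algebra_simps)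
  moreover have "\<bar>C2\<bar> \<le> g*\<bar>C2\<bar>" using g1 by (simp add: mult_le_cancel_right1)
  ultimately show "\<bar>c - d*\<xi>\<bar> \<le> (n+2) * \<bar>a - b*\<xi>\<bar>" unfolding C2_def A_def by linarith
  have "y - u*b = g*d" using ey by simp
  then have "g*\<bar>d\<bar> = \<bar>y - u*b\<bar>" using gpos by (simp add: abs_mult)
  also have "\<dots> \<le> y + u*b" using u0 b0 y by (simp add: abs_le_iff)
  also have "\<dots> \<le> b + n*b"
  proof -
    have "y \<le> n*y" using n1 y by simp
    moreover have "u*b \<le> n*b" using u0 ug gn b0 by (intro mult_right_mono) auto
    ultimately show ?thesis using bl by linarith
  qed
  finally have "g*\<bar>d\<bar> \<le> (n+1)*b" by (simp add: algebra_simps)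
  moreover have "\<bar>d\<bar> \<le> g*\<bar>d\<bar>" using g1 by (simp add: mult_le_cancel_right1)
  ultimately show "\<bar>d\<bar> \<le> (n+1) * b" by linarith
  show "a - b*\<xi> \<noteq> 0" using AC C0 by auto
qed

lemma coprime_bezout_int:
  fixes a b :: int
  assumes "coprime a b" shows "\<exists>s t. s*a + t*b = 1"
  using bezout_int[of a b] assms by (simp add: coprime_iff_gcd_eq_1)

lemma bezout_coprime_int:
  fixes a b s t :: int
  assumes "s*a + t*b = 1" shows "coprime a b"
proof (rule coprimeI)
  fix c assume "c dvd a" "c dvd b"
  then have "c dvd s*a + t*b" by simp
  then show "is_unit c" using assms by simp
qed

lemma coprime_shift_int:
  fixes a g q :: int
  assumes "coprime a g" shows "coprime (a + q*g) g"
proof (rule coprimeI)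
  fix c assume c: "c dvd a + q*g" "c dvd g"
  have "c dvd q*g" using c(2) by simp
  then have "c dvd a" using c(1) dvd_add_left_iff by blast
  then show "is_unit c" using assms c(2) coprime_common_divisor by blast
qed

lemma family:
  fixes x y n :: int
  assumes n: "n > 0" and y: "y > 0" and cxy: "coprime x y"
    and crt: "\<And>a0 m g :: int. coprime a0 m \<Longrightarrow> g > 0 \<Longrightarrow> \<exists>k. coprime (a0 + k*m) g"
  shows "\<exists>a1 b1. n dvd b1 \<and> (\<forall>K. coprime (a1 + K*n*x) (b1 + K*n*y) \<and>
            y*(a1 + K*n*x) - x*(b1 + K*n*y) = gcd y n)"
proof -
  define g where "g = gcd y n"
  define y1 where "y1 = y div g"
  define n1 where "n1 = n div g"
  have gpos: "g > 0" unfolding g_def using n by simp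
  have yg: "y = g*y1" unfolding y1_def g_def by simp
  have ng: "n = g*n1" unfolding n1_def g_def by simp
  have c1: "coprime y1 n1" unfolding y1_def n1_def g_def
    by (rule div_gcd_coprime) (use y in auto)
  have c2: "coprime y1 x"
  proof (rule coprimeI)
    fix c assume "c dvd y1" "c dvd x"
    then have "c dvd y" "c dvd x" using yg by auto
    then show "is_unit c" using cxy coprime_common_divisor by blast
  qed
  have "coprime y1 (x*n1)" using c1 c2 by simp
  then obtain s t where st: "s*y1 + t*(x*n1) = 1" using coprime_bezout_int by blast
  have "coprime s (x*n1)" using bezout_coprime_int[of y1 s t "x*n1"] st by (simp add: ac_simps)
  then obtain k where k: "coprime (s + k*(x*n1)) g" using crt gpos by blast
  define a1 where "a1 = s + k*(x*n1)"
  define \<beta>1 where "\<beta>1 = -t + k*y1"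
  have eq1: "y1*a1 - x*n1*\<beta>1 = 1" unfolding a1_def \<beta>1_def using st by (simp add: algebra_simps)
  show ?thesis
  proof (intro exI conjI allI)
    show "n dvd n*\<beta>1" by simp
    fix K
    define a where "a = a1 + K*n*x"
    define \<beta> where "\<beta> = \<beta>1 + K*g*y1"
    have aa: "a = a1 + (K*n1*x)*g" unfolding a_def using ng by (simp add: algebra_simps)
    have bb: "n*\<beta>1 + K*n*y = n*\<beta>" unfolding \<beta>_def using yg by (simp add: algebra_simps)
    have eq2: "y1*a - x*n1*\<beta> = 1" unfolding a_def \<beta>_def using eq1 ng
      by (simp add: algebra_simps)
    have "coprime a g" unfolding aa using coprime_shift_int k a1_def by blast
    moreover have "coprime a (n1*\<beta>)" using bezout_coprime_int[of y1 a "-x" "n1*\<beta>"] eq2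
      by (simp add: algebra_simps)
    ultimately have "coprime a (n*\<beta>)" using ng by (simp add: ac_simps)
    then show "coprime (a1 + K*n*x) (n*\<beta>1 + K*n*y)" using bb a_def by simp
    have "y*a - x*(n*\<beta>) = g*(y1*a - x*n1*\<beta>)" using yg ng by (simp add: algebra_simps)
    then have "y*a - x*(n*\<beta>) = g" using eq2 by simp
    then show "y*(a1 + K*n*x) - x*(n*\<beta>1 + K*n*y) = gcd y n" using bb a_def g_def by simp
  qed
qed

lemma complete_matrix:
  fixes x y a b g :: int
  assumes cab: "coprime a b" and eq: "y*a - x*b = g" and g: "g > 0"
  shows "\<exists>u c d. 0 \<le> u \<and> u < g \<and> a*d - b*c = 1 \<and> u*a + g*c = x \<and> u*b + g*d = y"
proof -
  obtain s t where st: "s*a + t*b = 1" using coprime_bezout_int cab by blast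
  define uu where "uu = x * s + y * t"
  define j where "j = uu div g"
  define c where "c = -t + j*a"
  define d where "d = s + j*b"
  define u where "u = uu mod g"
  have det: "a*d - b*c = 1" unfolding c_def d_def using st by (simp add: algebra_simps)
  have "uu = j*g + u" unfolding j_def u_def by simp
  moreover have "x*d - y*c = uu - j*(y*a - x*b)" unfolding c_def d_def uu_def by (simp add: algebra_simps)
  ultimately have ueq: "u = x*d - y*c" using eq by simp
  have "u*a + g*c = x*(a*d - b*c)" unfolding ueq eq[symmetric] by (simp add: algebra_simps)
  then have ex: "u*a + g*c = x" using det by simp
  have "u*b + g*d = y*(a*d - b*c)" unfolding ueq eq[symmetric] by (simp add: algebra_simps)
  then have ey: "u*b + g*d = y" using det by simp
  have "0 \<le> u" "u < g" unfolding u_def using g by auto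
  then show ?thesis using det ex ey by blast
qed


definition Kc :: "nat \<Rightarrow> real \<Rightarrow> real" where
  "Kc n B = 3*real n*(real n+3*real n*B) + 2*real n + 3"

lemma construct:
  fixes x y :: int and n :: nat and \<xi> B :: real
  assumes n: "n > 0" and y: "y > 0" and cxy: "coprime x y" and irr: "\<xi> \<notin> \<rat>"
    and CB: "\<bar>x - y*\<xi>\<bar> \<le> B / y" and B0: "B \<ge> 0"
  shows "\<exists>u a b c d. 0 \<le> u \<and> u < gcd y (int n) \<and> a*d - b*c = 1 \<and> int n dvd b
     \<and> u*a + gcd y (int n)*c = x \<and> u*b + gcd y (int n)*d = y \<and> b > 0
     \<and> \<bar>a - b*\<xi>\<bar> \<le> Kc n B / y \<and> \<bar>a - b*\<xi>\<bar> * b \<le> Kc n B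
     \<and> \<bar>c - d*\<xi>\<bar> \<le> Kc n B * \<bar>a - b*\<xi>\<bar> \<and> \<bar>d\<bar> \<le> Kc n B * b \<and> a - b*\<xi> \<noteq> 0"
proof -
  define g where "g = gcd y (int n)"
  have gpos: "g > 0" unfolding g_def using n by simp
  have gn: "g \<le> int n" unfolding g_def using n by (simp add: gcd_le2_int)
  have C0: "real_of_int x - real_of_int y*\<xi> \<noteq> 0"
  proof
    assume "real_of_int x - real_of_int y*\<xi> = 0"
    then have "\<xi> = real_of_int x / real_of_int y" using y by (simp add: field_simps)
    then have "\<xi> \<in> \<rat>" by simp
    then show False using irr by simp
  qed
  obtain a1 b1 where fam: "\<And>K. coprime (a1 + K*int n*x) (b1 + K*int n*y) \<and>
            y*(a1 + K*int n*x) - x*(b1 + K*int n*y) = g" and ndvd: "int n dvd b1"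
    using family[of "int n" y x] n y cxy crt_coprime unfolding g_def by auto
  define N where "N = int n * y"
  have Npos: "N > 0" unfolding N_def using n y by simp
  define K0 where "K0 = 1 - b1 div N"
  have bK0: "b1 + K0*int n*y = b1 mod N + N" unfolding K0_def N_def
    by (simp add: algebra_simps minus_div_mult_eq_mod[symmetric])
  have mN: "0 \<le> b1 mod N" "b1 mod N < N" using Npos by simp_all
  define C where "C = real_of_int x - real_of_int y*\<xi>"
  define Af where "Af K = real_of_int (a1 + K*int n*x) - real_of_int (b1 + K*int n*y) * \<xi>" for K
  have Ashift: "Af (K0+1) = Af K0 + n*C" unfolding Af_def C_def by (simp add: algebra_simps)
  obtain K where KA: "\<bar>Af K\<bar> \<ge> \<bar>C\<bar>/2" and Kb: "N \<le> b1 + K*int n*y" "b1 + K*int n*y \<le> 3*N"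
  proof (cases "\<bar>Af K0\<bar> \<ge> \<bar>C\<bar>/2")
    case True
    moreover have "N \<le> b1 + K0*int n*y" "b1 + K0*int n*y \<le> 3*N" using bK0 Npos mN by linarith+
    ultimately show ?thesis using that by blast
  next
    case False
    have "real n * \<bar>C\<bar> \<ge> \<bar>C\<bar>" using n by (simp add: mult_le_cancel_right1)
    moreover have "\<bar>Af (K0+1)\<bar> \<ge> n*\<bar>C\<bar> - \<bar>Af K0\<bar>" unfolding Ashift
      using abs_triangle_ineq2[of "n*C" "- Af K0"] by (simp add: abs_mult)
    ultimately have "\<bar>Af (K0+1)\<bar> \<ge> \<bar>C\<bar>/2" using False by linarith
    moreover have "b1 + (K0+1)*int n*y = b1 + K0*int n*y + N" unfolding N_def by (simp add: algebra_simps)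
    then have "N \<le> b1 + (K0+1)*int n*y" "b1 + (K0+1)*int n*y \<le> 3*N" using bK0 Npos mN by linarith+
    ultimately show ?thesis using that by blast
  qed
  define a where "a = a1 + K*int n*x"
  define b where "b = b1 + K*int n*y"
  have cab: "coprime a b" and eq: "y*a - x*b = g" using fam[of K] unfolding a_def b_def by auto
  have nb: "int n dvd b" unfolding b_def using ndvd by simp
  obtain u c d where ucd: "0 \<le> u" "u < g" "a*d - b*c = 1" "u*a + g*c = x" "u*b + g*d = y"
    using complete_matrix[OF cab eq gpos] by blast
  have bnd: "N \<le> b" "b \<le> 3*N" using Kb unfolding b_def by auto
  have rb: "real_of_int N \<le> real_of_int b" "real_of_int b \<le> 3*real_of_int N"
    using bnd by linarith+
  note RB = real_bounds[of "real_of_int y" "real_of_int g" "real n" "real_of_int u"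
      "real_of_int a" "real_of_int d" "real_of_int b" "real_of_int c" "real_of_int x" \<xi> B]
  have hyps: "real_of_int y > 0" "real_of_int g \<ge> 1" "real_of_int g \<le> real n" "0 \<le> real_of_int u"
      "real_of_int u < real_of_int g"
      "real_of_int a * real_of_int d - real_of_int b * real_of_int c = 1"
      "real_of_int u * real_of_int a + real_of_int g * real_of_int c = real_of_int x"
      "real_of_int u * real_of_int b + real_of_int g * real_of_int d = real_of_int y"
      "real n * real_of_int y \<le> real_of_int b" "real_of_int b \<le> 3 * real n * real_of_int y"
      "\<bar>real_of_int x - real_of_int y * \<xi>\<bar> \<le> B / real_of_int y"
      "\<bar>real_of_int a - real_of_int b * \<xi>\<bar> \<ge> \<bar>real_of_int x - real_of_int y * \<xi>\<bar> / 2"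
  proof -
    show "real_of_int y > 0" "real_of_int g \<ge> 1" "real_of_int g \<le> real n" "0 \<le> real_of_int u"
      "real_of_int u < real_of_int g" using y gpos gn ucd(1,2) by simp_all
    show "real_of_int a * real_of_int d - real_of_int b * real_of_int c = 1"
      using arg_cong[OF ucd(3), of real_of_int] by simp
    show "real_of_int u * real_of_int a + real_of_int g * real_of_int c = real_of_int x"
      using arg_cong[OF ucd(4), of real_of_int] by simp
    show "real_of_int u * real_of_int b + real_of_int g * real_of_int d = real_of_int y"
      using arg_cong[OF ucd(5), of real_of_int] by simp
    have "real_of_int N = real n * real_of_int y" unfolding N_def by simp
    then show "real n * real_of_int y \<le> real_of_int b" "real_of_int b \<le> 3 * real n * real_of_int y"
      using rb by simp_all
    show "\<bar>real_of_int x - real_of_int y * \<xi>\<bar> \<le> B / real_of_int y" using CB .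
    have "Af K = real_of_int a - real_of_int b * \<xi>" unfolding Af_def a_def b_def by simp
    then show "\<bar>real_of_int a - real_of_int b * \<xi>\<bar> \<ge> \<bar>real_of_int x - real_of_int y * \<xi>\<bar> / 2"
      using KA unfolding C_def by simp
  qed
  note R = RB[OF hyps(1-10) hyps(11) B0 hyps(12) C0]
  have bpos: "b > 0" using bnd Npos by simp
  have K1: "real n + 3*real n*B \<le> Kc n B" "3*real n*(real n + 3*real n*B) \<le> Kc n B"
     "real n+2 \<le> Kc n B" "real n+1 \<le> Kc n B"
  proof -
    have P0: "0 \<le> real n + 3*real n*B" using B0 by simp
    have "1 * (real n + 3*real n*B) \<le> (3*real n) * (real n + 3*real n*B)"
      using P0 n by (intro mult_right_mono) auto
    then have P1: "real n + 3*real n*B \<le> 3*real n*(real n+3*real n*B)" by simp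
    show "real n + 3*real n*B \<le> Kc n B" "3*real n*(real n + 3*real n*B) \<le> Kc n B"
      "real n+2 \<le> Kc n B" "real n+1 \<le> Kc n B"
      unfolding Kc_def using P0 P1 by linarith+
  qed
  have "\<bar>real_of_int a - real_of_int b*\<xi>\<bar> \<le> Kc n B / real_of_int y"
    using R(1) K1(1) y by (meson divide_right_mono of_int_0_less_iff order_trans less_imp_le)
  moreover have "\<bar>real_of_int a - real_of_int b*\<xi>\<bar> * real_of_int b \<le> Kc n B" using R(2) K1(2) by linarith
  moreover have "\<bar>real_of_int c - real_of_int d*\<xi>\<bar> \<le> Kc n B * \<bar>real_of_int a - real_of_int b*\<xi>\<bar>"
    using R(3) K1(3) by (meson abs_ge_zero mult_right_mono order_trans)
  moreover have "\<bar>real_of_int d\<bar> \<le> Kc n B * real_of_int b"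
    using R(4) K1(4) bpos by (meson mult_right_mono order_trans of_int_0_le_iff less_imp_le)
  ultimately show ?thesis using ucd nb bpos R(5) unfolding g_def by blast
qed



definition lamr :: "nat \<Rightarrow> real \<Rightarrow> int \<Rightarrow> int \<Rightarrow> real" where
  "lamr n \<xi> x y = real_of_int (gcd y (int n)) /
     (\<bar>real_of_int y\<bar> * \<bar>real_of_int x - real_of_int y * \<xi>\<bar>)"

lemma irr_ne:
  fixes x y :: int
  assumes "\<xi> \<notin> \<rat>" "y \<noteq> 0"
  shows "real_of_int x - real_of_int y * \<xi> \<noteq> 0" "real_of_int x / real_of_int y \<noteq> \<xi>"
proof -
  show "real_of_int x - real_of_int y * \<xi> \<noteq> 0"
  proof
    assume "real_of_int x - real_of_int y * \<xi> = 0"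
    then have "\<xi> = real_of_int x / real_of_int y" using assms(2) by (simp add: field_simps)
    then show False using assms(1) by simp
  qed
  then show "real_of_int x / real_of_int y \<noteq> \<xi>" using assms(2) by (auto simp: field_simps)
qed

lemma lam_term_eq:
  fixes x y :: int
  assumes irr: "\<xi> \<notin> \<rat>" and y: "y > 0"
  shows "lam_term n \<xi> x y = ereal (lamr n \<xi> x y)"
proof -
  have ne: "real_of_int x / real_of_int y \<noteq> \<xi>" using irr_ne[OF irr] y by simp
  have "(real_of_int y)^2 * \<bar>real_of_int x / real_of_int y - \<xi>\<bar>
        = \<bar>real_of_int y\<bar> * \<bar>real_of_int x - real_of_int y * \<xi>\<bar>"
  proof -
    have "real_of_int x / real_of_int y - \<xi> = (real_of_int x - real_of_int y * \<xi>) / real_of_int y"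
      using y by (simp add: field_simps)
    then show ?thesis using y by (simp add: abs_mult power2_eq_square abs_div)
  qed
  then show ?thesis unfolding lam_term_def lamr_def using ne by simp
qed

lemma dist_small:
  fixes x y :: int
  assumes "y > 0"
  shows "\<bar>real_of_int x / real_of_int y - \<xi>\<bar> = \<bar>real_of_int x - real_of_int y * \<xi>\<bar> / real_of_int y"
proof -
  have "real_of_int x / real_of_int y - \<xi> = (real_of_int x - real_of_int y * \<xi>) / real_of_int y"
    using assms by (simp add: field_simps)
  then show ?thesis using assms by (simp add: abs_div)
qed

lemma lam_upper:
  assumes irr: "\<xi> \<notin> \<rat>" and la: "lambda_n n \<xi> = ereal \<alpha>" and d: "\<delta> > 0"
  shows "\<exists>\<epsilon>>0. \<forall>x y. y > 0 \<longrightarrow> \<bar>real_of_int x / real_of_int y - \<xi>\<bar> < \<epsilon> \<longrightarrow>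
            lamr n \<xi> x y < \<alpha> + \<delta>"
proof -
  have "lambda_n n \<xi> < ereal (\<alpha> + \<delta>)" using la d by simp
  then obtain \<epsilon> where e: "\<epsilon> \<in> {0<..}" and
    S: "(SUP p\<in>{(s,t). t > 0 \<and>
                     0 < \<bar>real_of_int s / real_of_int t - \<xi>\<bar> \<and>
                     \<bar>real_of_int s / real_of_int t - \<xi>\<bar> < \<epsilon>}.
                lam_term n \<xi> (fst p) (snd p)) < ereal (\<alpha> + \<delta>)"
    unfolding lambda_n_def by (auto simp: INF_less_iff)
  show ?thesis
  proof (intro exI[of _ \<epsilon>] conjI allI impI)
    show "\<epsilon> > 0" using e by simp
    fix x y :: int assume y: "y > 0" and c: "\<bar>real_of_int x / real_of_int y - \<xi>\<bar> < \<epsilon>"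
    have ne: "real_of_int x / real_of_int y \<noteq> \<xi>" using irr_ne[OF irr] y by simp
    have "(x,y) \<in> {(s,t). t > 0 \<and>
                     0 < \<bar>real_of_int s / real_of_int t - \<xi>\<bar> \<and>
                     \<bar>real_of_int s / real_of_int t - \<xi>\<bar> < \<epsilon>}" using y c ne by auto
    then have "lam_term n \<xi> x y \<le> (SUP p\<in>{(s,t). t > 0 \<and>
                     0 < \<bar>real_of_int s / real_of_int t - \<xi>\<bar> \<and>
                     \<bar>real_of_int s / real_of_int t - \<xi>\<bar> < \<epsilon>}.
                lam_term n \<xi> (fst p) (snd p))"
      using SUP_upper[of "(x,y)" _ "\<lambda>p. lam_term n \<xi> (fst p) (snd p)"] by simp
    then have "lam_term n \<xi> x y < ereal (\<alpha> + \<delta>)" using S by simp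
    then show "lamr n \<xi> x y < \<alpha> + \<delta>" using lam_term_eq[OF irr y] by simp
  qed
qed

lemma lam_lower:
  assumes irr: "\<xi> \<notin> \<rat>" and la: "lambda_n n \<xi> = ereal \<alpha>" and d: "\<delta> > 0" and e: "\<epsilon> > 0"
  shows "\<exists>x y. y > 0 \<and> \<bar>real_of_int x / real_of_int y - \<xi>\<bar> < \<epsilon> \<and> lamr n \<xi> x y > \<alpha> - \<delta>"
proof -
  have "ereal \<alpha> \<le> (SUP p\<in>{(s,t). t > 0 \<and>
                     0 < \<bar>real_of_int s / real_of_int t - \<xi>\<bar> \<and>
                     \<bar>real_of_int s / real_of_int t - \<xi>\<bar> < \<epsilon>}.
                lam_term n \<xi> (fst p) (snd p))"
    using la e INF_lower[of \<epsilon> "{0<..}" "\<lambda>\<epsilon>. (SUP p\<in>{(s,t). t > 0 \<and>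
                     0 < \<bar>real_of_int s / real_of_int t - \<xi>\<bar> \<and>
                     \<bar>real_of_int s / real_of_int t - \<xi>\<bar> < \<epsilon>}.
                lam_term n \<xi> (fst p) (snd p))"] unfolding lambda_n_def by simp
  then have "ereal (\<alpha> - \<delta>) < (SUP p\<in>{(s,t). t > 0 \<and>
                     0 < \<bar>real_of_int s / real_of_int t - \<xi>\<bar> \<and>
                     \<bar>real_of_int s / real_of_int t - \<xi>\<bar> < \<epsilon>}.
                lam_term n \<xi> (fst p) (snd p))" using d
  proof -
    have "ereal (\<alpha> - \<delta>) < ereal \<alpha>" using d by simp
    then show ?thesis using \<open>ereal \<alpha> \<le> _\<close> by (rule order_less_le_trans)
  qed
  then obtain p where p: "p \<in> {(s,t). t > 0 \<and>
                     0 < \<bar>real_of_int s / real_of_int t - \<xi>\<bar> \<and>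
                     \<bar>real_of_int s / real_of_int t - \<xi>\<bar> < \<epsilon>}"
    and lt: "ereal (\<alpha> - \<delta>) < lam_term n \<xi> (fst p) (snd p)"
    by (auto simp: less_SUP_iff)
  obtain x y where xy: "p = (x,y)" by (cases p)
  have y: "y > 0" and c: "\<bar>real_of_int x / real_of_int y - \<xi>\<bar> < \<epsilon>" using p xy by auto
  have "lamr n \<xi> x y > \<alpha> - \<delta>" using lt lam_term_eq[OF irr y] xy by simp
  then show ?thesis using y c by blast
qed

lemma alpha_ge1:
  assumes irr: "\<xi> \<notin> \<rat>" and la: "lambda_n n \<xi> = ereal \<alpha>" and n: "n > 0"
  shows "\<alpha> \<ge> 1"
proof (rule ccontr)
  assume "\<not> \<alpha> \<ge> 1"
  then have d: "1 - \<alpha> > 0" by simp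
  obtain \<epsilon> where e: "\<epsilon> > 0" and U: "\<And>x y. y > 0 \<Longrightarrow> \<bar>real_of_int x / real_of_int y - \<xi>\<bar> < \<epsilon> \<Longrightarrow>
            lamr n \<xi> x y < \<alpha> + (1 - \<alpha>)"
    using lam_upper[OF irr la d] by blast
  obtain N0 :: nat where "inverse (real (Suc N0)) < \<epsilon>" using reals_Archimedean[OF e] by blast
  then have N: "Suc N0 > 0" "1 / real (Suc N0) < \<epsilon>" by (simp_all add: inverse_eq_divide)
  define N where "N = Suc N0"
  note N = N[folded N_def]
  obtain h k where hk: "0 < k" "k \<le> int N" "\<bar>of_int k * \<xi> - of_int h\<bar> < 1/N"
    using Dirichlet_approx[OF N(1), of \<xi>] by blast
  have C: "\<bar>real_of_int h - real_of_int k * \<xi>\<bar> < 1/N" using hk(3) by (simp add: abs_minus_commute)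
  have C0: "real_of_int h - real_of_int k * \<xi> \<noteq> 0" using irr_ne[OF irr] hk(1) by simp
  have kN: "real_of_int k \<le> real N" using hk(2) by simp
  have k1: "real_of_int k \<ge> 1" using hk(1) by simp
  have "\<bar>real_of_int h / real_of_int k - \<xi>\<bar> = \<bar>real_of_int h - real_of_int k * \<xi>\<bar> / real_of_int k"
    using dist_small hk(1) by blast
  also have "\<dots> \<le> \<bar>real_of_int h - real_of_int k * \<xi>\<bar>" using k1
    by (simp add: divide_le_eq mult_le_cancel_left1 order_trans)
  also have "\<dots> < \<epsilon>" using C N(2) by linarith
  finally have close: "\<bar>real_of_int h / real_of_int k - \<xi>\<bar> < \<epsilon>" .
  have "real_of_int k * \<bar>real_of_int h - real_of_int k * \<xi>\<bar> < real N * (1/N)"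
    using C kN k1 C0 by (intro mult_le_less_imp_less) auto
  then have den: "\<bar>real_of_int k\<bar> * \<bar>real_of_int h - real_of_int k * \<xi>\<bar> < 1" using N(1) k1 by simp
  have "gcd k (int n) > 0" using n by simp
  then have g1: "real_of_int (gcd k (int n)) \<ge> 1" by linarith
  have pos: "\<bar>real_of_int k\<bar> * \<bar>real_of_int h - real_of_int k * \<xi>\<bar> > 0" using C0 hk(1) by simp
  have "lamr n \<xi> h k > 1" unfolding lamr_def using den g1 pos
    by (simp add: less_divide_eq)
  moreover have "lamr n \<xi> h k < \<alpha> + (1 - \<alpha>)" using U[OF hk(1) close] .
  ultimately show False by simp
qed

lemma small_y_excl:
  assumes irr: "\<xi> \<notin> \<rat>"
  shows "\<exists>\<epsilon>>0. \<forall>x y. 0 < y \<and> y \<le> int Y0 \<longrightarrow> \<bar>real_of_int x / real_of_int y - \<xi>\<bar> \<ge> \<epsilon>"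
proof (induction Y0)
  case 0
  then show ?case by (intro exI[of _ 1]) auto
next
  case (Suc m)
  then obtain \<epsilon> where e: "\<epsilon> > 0" and H: "\<And>x y. 0 < y \<and> y \<le> int m \<Longrightarrow>
      \<bar>real_of_int x / real_of_int y - \<xi>\<bar> \<ge> \<epsilon>" by blast
  define z where "z = real (Suc m) * \<xi>"
  define \<delta> where "\<delta> = min (frac z) (1 - frac z) / real (Suc m)"
  have fz: "frac z \<noteq> 0"
  proof
    assume "frac z = 0"
    then have "z \<in> \<int>" by (simp add: frac_eq_0_iff)
    then obtain q where "z = of_int q" by (auto elim: Ints_cases)
    then have "\<xi> = of_int q / real (Suc m)" unfolding z_def by (simp add: field_simps)
    then show False using irr by simp
  qed
  have dpos: "\<delta> > 0" unfolding \<delta>_def using fz frac_lt_1[of z] frac_ge_0[of z]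
    by (simp add: min_def)
  show ?case
  proof (intro exI[of _ "min \<epsilon> \<delta>"] conjI allI impI)
    show "min \<epsilon> \<delta> > 0" using e dpos by simp
    fix x y :: int assume xy: "0 < y \<and> y \<le> int (Suc m)"
    show "\<bar>real_of_int x / real_of_int y - \<xi>\<bar> \<ge> min \<epsilon> \<delta>"
    proof (cases "y \<le> int m")
      case True
      then show ?thesis using H[of y x] xy by simp
    next
      case False
      then have yy: "y = int (Suc m)" using xy by simp
      have "min (frac z) (1 - frac z) \<le> \<bar>real_of_int x - z\<bar>"
      proof (cases "x \<le> floor z")
        case True
        then have "real_of_int x \<le> real_of_int (floor z)" by simp
        then have "z - real_of_int x \<ge> frac z" unfolding frac_def by simp
        then show ?thesis by simp
      next
        case False
        then have "real_of_int x \<ge> real_of_int (floor z) + 1" by simp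
        then have "real_of_int x - z \<ge> 1 - frac z" unfolding frac_def by simp
        then show ?thesis by simp
      qed
      moreover have "\<bar>real_of_int x / real_of_int y - \<xi>\<bar> = \<bar>real_of_int x - z\<bar> / real (Suc m)"
        using dist_small[of y x \<xi>] xy yy unfolding z_def by simp
      ultimately have "\<bar>real_of_int x / real_of_int y - \<xi>\<bar> \<ge> \<delta>" unfolding \<delta>_def
        by (simp add: divide_right_mono)
      then show ?thesis by simp
    qed
  qed
qed

lemma reduce:
  fixes x y :: int
  assumes y: "y > 0" and irr: "\<xi> \<notin> \<rat>"
  shows "\<exists>x' y'. coprime x' y' \<and> y' > 0 \<and> real_of_int x' / real_of_int y' = real_of_int x / real_of_int y
           \<and> lamr n \<xi> x' y' \<ge> lamr n \<xi> x y"
proof -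
  define m where "m = gcd x y"
  have mpos: "m > 0" unfolding m_def using y by simp
  define x' where "x' = x div m"
  define y' where "y' = y div m"
  have xm: "x = m * x'" unfolding x'_def m_def by simp
  have ym: "y = m * y'" unfolding y'_def m_def by simp
  have cop: "coprime x' y'" unfolding x'_def y'_def m_def
    by (rule div_gcd_coprime) (use y in auto)
  have y'pos: "y' > 0" using y mpos ym by (simp add: zero_less_mult_iff)
  have ratio: "real_of_int x' / real_of_int y' = real_of_int x / real_of_int y"
    using xm ym mpos by simp
  have gle: "gcd y (int n) \<le> m * gcd y' (int n)"
  proof -
    have "gcd y (int n) dvd m * gcd y' (int n)"
    proof -
      have "gcd y (int n) dvd m*y'" using ym by simp
      moreover have "gcd y (int n) dvd m*int n" by simp
      ultimately have "gcd y (int n) dvd gcd (m*y') (m*int n)" by (rule gcd_greatest)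
      moreover have "gcd (m*y') (m*int n) = m * gcd y' (int n)" using mpos
        by (simp add: gcd_mult_left)
      ultimately show ?thesis by simp
    qed
    moreover have "m * gcd y' (int n) > 0" using mpos y'pos by simp
    ultimately show ?thesis by (simp add: zdvd_imp_le)
  qed
  define D where "D = \<bar>real_of_int y'\<bar> * \<bar>real_of_int x' - real_of_int y' * \<xi>\<bar>"
  have Dpos: "D > 0" unfolding D_def using irr_ne[OF irr] y'pos by simp
  have Dxy: "\<bar>real_of_int y\<bar> * \<bar>real_of_int x - real_of_int y * \<xi>\<bar> = (real_of_int m)^2 * D"
  proof -
    have "real_of_int x - real_of_int y * \<xi> = real_of_int m * (real_of_int x' - real_of_int y' * \<xi>)"
      using xm ym by (simp add: algebra_simps)
    then show ?thesis unfolding D_def using ym mpos by (simp add: abs_mult power2_eq_square)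
  qed
  have "lamr n \<xi> x y = real_of_int (gcd y (int n)) / ((real_of_int m)^2 * D)"
    unfolding lamr_def Dxy ..
  also have "\<dots> \<le> real_of_int (m * gcd y' (int n)) / ((real_of_int m)^2 * D)"
  proof -
    have "real_of_int (gcd y (int n)) \<le> real_of_int (m * gcd y' (int n))" using gle by (simp only: of_int_le_iff)
    then show ?thesis using Dpos mpos by (intro divide_right_mono) auto
  qed
  also have "\<dots> = real_of_int (gcd y' (int n)) / (real_of_int m * D)"
    using mpos by (simp add: power2_eq_square)
  also have "\<dots> \<le> real_of_int (gcd y' (int n)) / D"
  proof -
    have "real_of_int m \<ge> 1" using mpos by simp
    then have "D \<le> real_of_int m * D" using Dpos by (simp add: mult_le_cancel_right1)
    moreover have "real_of_int (gcd y' (int n)) \<ge> 0" by simp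
    ultimately show ?thesis using Dpos by (intro divide_left_mono) auto
  qed
  also have "\<dots> = lamr n \<xi> x' y'" unfolding lamr_def D_def ..
  finally show ?thesis using cop y'pos ratio by blast
qed



lemma gcd_transform:
  fixes a b c d s t :: int and n :: nat
  assumes det: "a*d - b*c = 1" and nb: "int n dvd b"
  shows "gcd (s*b + t*d) (int n) = gcd t (int n)"
proof -
  have cop: "coprime d (int n)"
  proof (rule coprimeI)
    fix z assume z: "z dvd d" "z dvd int n"
    have "z dvd b" using z(2) nb by (rule dvd_trans)
    then have "z dvd a*d - b*c" using z by simp
    then show "is_unit z" using det by simp
  qed
  obtain q where q: "b = int n * q" using nb by blast
  have "gcd (s*b + t*d) (int n) = gcd (t*d + (s*q)*int n) (int n)" using q by (simp add: algebra_simps)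
  also have "\<dots> = gcd (t*d) (int n)"
    using gcd_add_mult[of "int n" "s*q" "t*d"] by (simp add: gcd.commute add.commute)
  also have "\<dots> = gcd t (int n)" using cop by (simp add: gcd_mult_left_right_cancel coprime_commute)
  finally show ?thesis .
qed

lemma transform:
  fixes a b c d s t :: int and n :: nat and \<xi> :: real
  assumes det: "a*d - b*c = 1" and nb: "int n dvd b" and b0: "b \<noteq> 0"
    and A0: "real_of_int a - real_of_int b * \<xi> \<noteq> 0"
  defines "\<eta> \<equiv> - (real_of_int c - real_of_int d * \<xi>) / (real_of_int a - real_of_int b * \<xi>)"
    and "\<eta>' \<equiv> - real_of_int d / real_of_int b"
  shows "real_of_int (gcd t (int n)) * \<bar>\<eta> - \<eta>'\<bar> /
           (\<bar>real_of_int s - real_of_int t * \<eta>\<bar> * \<bar>real_of_int s - real_of_int t * \<eta>'\<bar>)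
         = lamr n \<xi> (s*a + t*c) (s*b + t*d)"
    and "\<bar>\<eta> - \<eta>'\<bar> = 1 / (\<bar>real_of_int a - real_of_int b * \<xi>\<bar> * \<bar>real_of_int b\<bar>)"
proof -
  define A where "A = real_of_int a - real_of_int b * \<xi>"
  define C2 where "C2 = real_of_int c - real_of_int d * \<xi>"
  define L where "L = real_of_int (s*a + t*c) - real_of_int (s*b + t*d) * \<xi>"
  define Y where "Y = real_of_int (s*b + t*d)"
  have rb: "real_of_int b \<noteq> 0" using b0 by simp
  have Ad: "A * real_of_int d - real_of_int b * C2 = 1"
  proof -
    have "A * real_of_int d - real_of_int b * C2 = real_of_int (a*d - b*c)"
      unfolding A_def C2_def by (simp add: algebra_simps)
    then show ?thesis using det by simp
  qed
  have e1: "real_of_int s - real_of_int t * \<eta> = L / A"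
    unfolding \<eta>_def L_def A_def[symmetric] C2_def[symmetric] using A0[folded A_def]
    by (simp add: field_simps A_def C2_def)
  have e2: "real_of_int s - real_of_int t * \<eta>' = Y / real_of_int b"
    unfolding \<eta>'_def Y_def using rb by (simp add: field_simps)
  have e3: "\<eta> - \<eta>' = 1 / (A * real_of_int b)"
  proof -
    have "\<eta> - \<eta>' = (A * real_of_int d - real_of_int b * C2) / (A * real_of_int b)"
      unfolding \<eta>_def \<eta>'_def A_def[symmetric] C2_def[symmetric] using A0[folded A_def] rb
      by (simp add: field_simps)
    then show ?thesis using Ad by simp
  qed
  show "\<bar>\<eta> - \<eta>'\<bar> = 1 / (\<bar>real_of_int a - real_of_int b * \<xi>\<bar> * \<bar>real_of_int b\<bar>)"
    unfolding e3 A_def by (simp add: abs_mult)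
  have g: "gcd (s*b + t*d) (int n) = gcd t (int n)" using gcd_transform[OF det nb] .
  have "real_of_int (gcd t (int n)) * \<bar>\<eta> - \<eta>'\<bar> /
           (\<bar>real_of_int s - real_of_int t * \<eta>\<bar> * \<bar>real_of_int s - real_of_int t * \<eta>'\<bar>)
        = real_of_int (gcd t (int n)) / (\<bar>Y\<bar> * \<bar>L\<bar>)"
    unfolding e1 e2 e3 using A0[folded A_def] rb
    by (cases "L = 0"; cases "Y = 0") (simp_all add: abs_mult abs_divide field_simps)
  also have "\<dots> = lamr n \<xi> (s*a + t*c) (s*b + t*d)"
    unfolding lamr_def g Y_def L_def by simp
  finally show "real_of_int (gcd t (int n)) * \<bar>\<eta> - \<eta>'\<bar> /
           (\<bar>real_of_int s - real_of_int t * \<eta>\<bar> * \<bar>real_of_int s - real_of_int t * \<eta>'\<bar>)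
         = lamr n \<xi> (s*a + t*c) (s*b + t*d)" .
qed

lemma lamr_neg: "lamr n \<xi> (-x) (-y) = lamr n \<xi> x y"
  unfolding lamr_def by (simp add: abs_minus_commute algebra_simps)

lemma int_conv_const:
  fixes z :: "nat \<Rightarrow> int"
  assumes "(\<lambda>k. real_of_int (z k)) \<longlonglongrightarrow> l"
  shows "\<exists>N. \<forall>k\<ge>N. z k = z N"
proof -
  obtain N where N: "\<And>k. k \<ge> N \<Longrightarrow> dist (real_of_int (z k)) l < 1/2"
    using assms[unfolded lim_sequentially] by (metis half_gt_zero_iff zero_less_one)
  have "z k = z N" if "k \<ge> N" for k
  proof -
    have "\<bar>real_of_int (z k) - l\<bar> < 1/2" "\<bar>real_of_int (z N) - l\<bar> < 1/2"
      using N[OF that] N[of N] by (simp_all add: dist_real_def)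
    then have "\<bar>real_of_int (z k - z N)\<bar> < 1" by (simp, smt (verit))
    then show ?thesis by linarith
  qed
  then show ?thesis by blast
qed



lemma lamr_small:
  fixes X Y :: int
  assumes irr: "\<xi> \<notin> \<rat>"
    and U: "\<And>x y. y > 0 \<Longrightarrow> \<bar>real_of_int x / real_of_int y - \<xi>\<bar> < \<epsilon> \<Longrightarrow> lamr n \<xi> x y < \<beta>"
    and nz: "(X,Y) \<noteq> (0,0)" and L: "\<bar>real_of_int X - real_of_int Y * \<xi>\<bar> < min \<epsilon> 1"
  shows "Y \<noteq> 0" "lamr n \<xi> X Y < \<beta>"
proof -
  show Y0: "Y \<noteq> 0"
  proof
    assume "Y = 0"
    then have "X \<noteq> 0" using nz by simp
    then have "\<bar>real_of_int X\<bar> \<ge> 1" by linarith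
    then show False using L \<open>Y = 0\<close> by simp
  qed
  show "lamr n \<xi> X Y < \<beta>"
  proof (cases "Y > 0")
    case True
    have "\<bar>real_of_int X / real_of_int Y - \<xi>\<bar> = \<bar>real_of_int X - real_of_int Y * \<xi>\<bar> / real_of_int Y"
      using dist_small True by blast
    also have "\<dots> \<le> \<bar>real_of_int X - real_of_int Y * \<xi>\<bar>"
      using True by (simp add: divide_le_eq mult_le_cancel_left1)
    also have "\<dots> < \<epsilon>" using L by simp
    finally show ?thesis using U True by blast
  next
    case False
    then have Yn: "-Y > 0" using Y0 by simp
    have "\<bar>real_of_int (-X) / real_of_int (-Y) - \<xi>\<bar> = \<bar>real_of_int (-X) - real_of_int (-Y) * \<xi>\<bar> / real_of_int (-Y)"
      using dist_small Yn by blast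
    also have "\<dots> \<le> \<bar>real_of_int (-X) - real_of_int (-Y) * \<xi>\<bar>"
      using Yn by (simp add: divide_le_eq mult_le_cancel_left1 del: of_int_minus)
    also have "\<dots> = \<bar>real_of_int X - real_of_int Y * \<xi>\<bar>" by (simp add: abs_minus_commute)
    also have "\<dots> < \<epsilon>" using L by simp
    finally have "lamr n \<xi> (-X) (-Y) < \<beta>" using U Yn by blast
    then show ?thesis using lamr_neg by simp
  qed
qed

lemma lamr_pos:
  assumes irr: "\<xi> \<notin> \<rat>" and n: "n > 0" and Y: "Y \<noteq> 0"
  shows "lamr n \<xi> X Y > 0"
proof -
  have "gcd Y (int n) > 0" using n by simp
  moreover have "\<bar>real_of_int Y\<bar> * \<bar>real_of_int X - real_of_int Y * \<xi>\<bar> > 0"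
    using irr_ne[OF irr Y] Y by simp
  ultimately show ?thesis unfolding lamr_def by simp
qed

lemma lamr_bound:
  fixes x y :: int
  assumes irr: "\<xi> \<notin> \<rat>" and n: "n > 0" and y: "y > 0" and l: "lamr n \<xi> x y > 1/2"
  shows "\<bar>real_of_int x - real_of_int y * \<xi>\<bar> \<le> (2 * real n) / real_of_int y"
proof -
  define D where "D = \<bar>real_of_int y\<bar> * \<bar>real_of_int x - real_of_int y * \<xi>\<bar>"
  have Dpos: "D > 0" unfolding D_def using irr_ne[OF irr] y by simp
  have g: "real_of_int (gcd y (int n)) \<le> real n"
  proof -
    have "gcd y (int n) \<le> int n" using n by (simp add: gcd_le2_int)
    then show ?thesis by linarith
  qed
  have "1/2 < real_of_int (gcd y (int n)) / D" using l unfolding lamr_def D_def .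
  then have "D < 2 * real_of_int (gcd y (int n))" using Dpos by (simp add: field_simps)
  then have "D \<le> 2 * real n" using g by linarith
  then have "real_of_int y * \<bar>real_of_int x - real_of_int y * \<xi>\<bar> \<le> 2 * real n"
    unfolding D_def using y by simp
  then show ?thesis using y by (simp add: field_simps)
qed

lemma pair_nz:
  fixes a b c d s t :: int
  assumes "a*d - b*c = 1" "(s,t) \<noteq> (0,0)"
  shows "(s*a + t*c, s*b + t*d) \<noteq> (0,0)"
proof
  assume h: "(s*a + t*c, s*b + t*d) = (0,0)"
  have "s = s*(a*d - b*c)" using assms(1) by simp
  also have "\<dots> = d*(s*a + t*c) - c*(s*b + t*d)" by (simp add: algebra_simps)
  finally have "s = 0" using h by simp
  have "t = t*(a*d - b*c)" using assms(1) by simp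
  also have "\<dots> = a*(s*b + t*d) - b*(s*a + t*c)" by (simp add: algebra_simps)
  finally have "t = 0" using h by simp
  then show False using \<open>s = 0\<close> assms(2) by simp
qed

lemma good_seq:
  assumes irr: "\<xi> \<notin> \<rat>" and la: "lambda_n n \<xi> = ereal \<alpha>"
  shows "\<exists>x y. coprime x y \<and> y > int k \<and> \<bar>real_of_int x / real_of_int y - \<xi>\<bar> < 1/(real k+1)
           \<and> lamr n \<xi> x y > \<alpha> - 1/(real k + 2)"
proof -
  obtain \<epsilon>0 where e0: "\<epsilon>0 > 0" and H: "\<And>x y. 0 < y \<and> y \<le> int k \<Longrightarrow>
      \<bar>real_of_int x / real_of_int y - \<xi>\<bar> \<ge> \<epsilon>0"
    using small_y_excl[OF irr, of k] by blast
  have e: "min \<epsilon>0 (1/(real k+1)) > 0" using e0 by simp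
  have d: "1/(real k+2) > 0" by simp
  obtain x0 y0 where xy0: "y0 > 0" "\<bar>real_of_int x0 / real_of_int y0 - \<xi>\<bar> < min \<epsilon>0 (1/(real k+1))"
    "lamr n \<xi> x0 y0 > \<alpha> - 1/(real k + 2)"
    using lam_lower[OF irr la d e] by blast
  obtain x y where xy: "coprime x y" "y > 0" "real_of_int x / real_of_int y = real_of_int x0 / real_of_int y0"
    "lamr n \<xi> x y \<ge> lamr n \<xi> x0 y0"
    using reduce[OF xy0(1) irr, of x0 n] by blast
  have c: "\<bar>real_of_int x / real_of_int y - \<xi>\<bar> < min \<epsilon>0 (1/(real k+1))" using xy(3) xy0(2) by simp
  have "y > int k"
  proof (rule ccontr)
    assume "\<not> y > int k"
    then have "\<bar>real_of_int x / real_of_int y - \<xi>\<bar> \<ge> \<epsilon>0" using H xy(2) by simp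
    then show False using c by simp
  qed
  then show ?thesis using xy c xy0(3) by (intro exI[of _ x] exI[of _ y]) auto
qed



lemma main_real:
  fixes n :: nat and \<xi> \<alpha> :: real
  assumes n: "n > 0" and irr: "\<xi> \<notin> \<rat>" and la: "lambda_n n \<xi> = ereal \<alpha>"
  shows "\<exists>\<eta> \<eta>'. \<eta> \<noteq> \<eta>' \<and> mu_n n \<eta> \<eta>' = ereal \<alpha> \<and>
        (\<exists>s t. (s, t) \<noteq> (0, 0) \<and> mu_term n \<eta> \<eta>' s t = mu_n n \<eta> \<eta>')"
proof -
  have a1: "\<alpha> \<ge> 1" using alpha_ge1[OF irr la n] .
  define P where "P k x y \<longleftrightarrow> coprime x y \<and> y > int k \<and> \<bar>real_of_int x / real_of_int y - \<xi>\<bar> < 1/(real k+1)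
           \<and> lamr n \<xi> x y > \<alpha> - 1/(real k + 2)" for k x y
  have "\<forall>k. \<exists>x y. P k x y" unfolding P_def using good_seq[OF irr la] by blast
  then obtain X Y where XY: "\<And>k. P k (X k) (Y k)" by metis
  have Ypos: "Y k > int k" and cop: "coprime (X k) (Y k)" and lamX: "lamr n \<xi> (X k) (Y k) > \<alpha> - 1/(real k + 2)" for k
    using XY[of k] unfolding P_def by auto
  have Yp: "Y k > 0" for k using Ypos[of k] by simp
  have half: "lamr n \<xi> (X k) (Y k) > 1/2" for k
  proof -
    have "1/(real k + 2) \<le> 1/2" by (simp add: field_simps)
    then show ?thesis using lamX[of k] a1 by linarith
  qed
  have CB: "\<bar>real_of_int (X k) - real_of_int (Y k) * \<xi>\<bar> \<le> (2 * real n) / real_of_int (Y k)" for k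
    using lamr_bound[OF irr n Yp half] .
  define B where "B = 2 * real n"
  have B0: "B \<ge> 0" unfolding B_def by simp
  define KK where "KK = Kc n B"
  have KKpos: "KK > 0"
  proof -
    have "0 \<le> 3*real n*(real n + 3*real n*B)" using B0 by simp
    then show ?thesis unfolding KK_def Kc_def by linarith
  qed
  define Q where "Q k u a b c d \<longleftrightarrow> 0 \<le> u \<and> u < gcd (Y k) (int n) \<and> a*d - b*c = 1 \<and> int n dvd b
     \<and> u*a + gcd (Y k) (int n)*c = X k \<and> u*b + gcd (Y k) (int n)*d = Y k \<and> b > 0
     \<and> \<bar>a - b*\<xi>\<bar> \<le> KK / Y k \<and> \<bar>a - b*\<xi>\<bar> * b \<le> KK
     \<and> \<bar>c - d*\<xi>\<bar> \<le> KK * \<bar>a - b*\<xi>\<bar> \<and> \<bar>d\<bar> \<le> KK * b \<and> a - b*\<xi> \<noteq> 0" for k u a b c d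
  have "\<forall>k. \<exists>u a b c d. Q k u a b c d"
    unfolding Q_def KK_def using construct[OF n Yp cop irr CB[folded B_def] B0] by blast
  then obtain U Aa Bb Cc Dd where QQ: "\<And>k. Q k (U k) (Aa k) (Bb k) (Cc k) (Dd k)" by metis
  define G where "G k = gcd (Y k) (int n)" for k
  have U0: "0 \<le> U k" and UG: "U k < G k" and det: "Aa k * Dd k - Bb k * Cc k = 1"
    and nb: "int n dvd Bb k" and eX: "U k * Aa k + G k * Cc k = X k" and eY: "U k * Bb k + G k * Dd k = Y k"
    and bpos: "Bb k > 0"
    and Ab1: "\<bar>real_of_int (Aa k) - real_of_int (Bb k)*\<xi>\<bar> \<le> KK / real_of_int (Y k)"
    and Ab2: "\<bar>real_of_int (Aa k) - real_of_int (Bb k)*\<xi>\<bar> * real_of_int (Bb k) \<le> KK"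
    and Cb: "\<bar>real_of_int (Cc k) - real_of_int (Dd k)*\<xi>\<bar> \<le> KK * \<bar>real_of_int (Aa k) - real_of_int (Bb k)*\<xi>\<bar>"
    and Db: "\<bar>real_of_int (Dd k)\<bar> \<le> KK * real_of_int (Bb k)"
    and A0: "real_of_int (Aa k) - real_of_int (Bb k)*\<xi> \<noteq> 0" for k
    using QQ[of k] unfolding Q_def G_def by auto
  have Gn: "1 \<le> G k" "G k \<le> int n" for k
  proof -
    have "gcd (Y k) (int n) > 0" using n by simp
    then show "1 \<le> G k" unfolding G_def by linarith
    show "G k \<le> int n" unfolding G_def using n by (simp add: gcd_le2_int)
  qed
  define Af where "Af k = real_of_int (Aa k) - real_of_int (Bb k)*\<xi>" for k
  define \<eta> where "\<eta> k = - (real_of_int (Cc k) - real_of_int (Dd k) * \<xi>) / Af k" for k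
  define \<eta>' where "\<eta>' k = - real_of_int (Dd k) / real_of_int (Bb k)" for k
  have eta_b: "\<bar>\<eta> k\<bar> \<le> KK" for k
  proof -
    have "\<bar>\<eta> k\<bar> = \<bar>real_of_int (Cc k) - real_of_int (Dd k) * \<xi>\<bar> / \<bar>Af k\<bar>"
      unfolding \<eta>_def by (simp add: abs_divide abs_minus_commute)
    also have "\<dots> \<le> KK" using Cb[of k] A0[of k] unfolding Af_def by (simp add: divide_le_eq)
    finally show ?thesis .
  qed
  have eta'_b: "\<bar>\<eta>' k\<bar> \<le> KK" for k
  proof -
    have "\<bar>\<eta>' k\<bar> = \<bar>real_of_int (Dd k)\<bar> / real_of_int (Bb k)"
      unfolding \<eta>'_def using bpos[of k] by (simp add: abs_divide)
    also have "\<dots> \<le> KK" using Db[of k] bpos[of k] by (simp add: divide_le_eq)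
    finally show ?thesis .
  qed
  have TR1: "real_of_int (gcd t (int n)) * \<bar>\<eta> k - \<eta>' k\<bar> /
           (\<bar>real_of_int s - real_of_int t * \<eta> k\<bar> * \<bar>real_of_int s - real_of_int t * \<eta>' k\<bar>)
         = lamr n \<xi> (s * Aa k + t * Cc k) (s * Bb k + t * Dd k)" for k s t
    using transform(1)[where s=s and t=t, OF det[of k] nb[of k] _ A0[of k]] bpos[of k]
    unfolding \<eta>_def \<eta>'_def Af_def by simp
  have diffb: "\<bar>\<eta> k - \<eta>' k\<bar> \<ge> 1 / KK" for k
  proof -
    have "\<bar>\<eta> k - \<eta>' k\<bar> = 1 / (\<bar>Af k\<bar> * real_of_int (Bb k))"
      using transform(2)[OF det[of k] nb[of k] _ A0[of k]] bpos[of k]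
      unfolding \<eta>_def \<eta>'_def Af_def by simp
    moreover have "\<bar>Af k\<bar> * real_of_int (Bb k) \<le> KK" using Ab2[of k] unfolding Af_def .
    moreover have "\<bar>Af k\<bar> * real_of_int (Bb k) > 0" using A0[of k] bpos[of k] unfolding Af_def by simp
    ultimately show ?thesis by (simp add: frac_le)
  qed
  define F where "F k = (real_of_int (U k), real_of_int (G k), \<eta> k, \<eta>' k)" for k
  define M where "M = real n + KK"
  have "range F \<subseteq> {-M..M} \<times> {-M..M} \<times> {-M..M} \<times> {-M..M}"
  proof
    fix z assume "z \<in> range F"
    then obtain k where z: "z = F k" by blast
    have "real_of_int (U k) \<ge> 0" "real_of_int (U k) \<le> real n" using U0[of k] UG[of k] Gn(2)[of k] by linarith+
    moreover have "real_of_int (G k) \<ge> 0" "real_of_int (G k) \<le> real n" using Gn[of k] by linarith+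
    moreover have "\<bar>\<eta> k\<bar> \<le> KK" "\<bar>\<eta>' k\<bar> \<le> KK" using eta_b eta'_b by auto
    ultimately show "z \<in> {-M..M} \<times> {-M..M} \<times> {-M..M} \<times> {-M..M}"
      unfolding z F_def M_def using KKpos by (auto simp: abs_le_iff)
  qed
  then have "bounded (range F)"
    by (rule bounded_subset[rotated]) (intro bounded_Times bounded_closed_interval)
  then obtain l r where r: "strict_mono r" and lim: "(F \<circ> r) \<longlonglongrightarrow> l"
    using bounded_imp_convergent_subsequence by blast
  have limU: "(\<lambda>k. real_of_int (U (r k))) \<longlonglongrightarrow> fst l"
    using tendsto_fst[OF lim] by (simp add: o_def F_def)
  have limG: "(\<lambda>k. real_of_int (G (r k))) \<longlonglongrightarrow> fst (snd l)"
    using tendsto_fst[OF tendsto_snd[OF lim]] by (simp add: o_def F_def)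
  have limE: "(\<lambda>k. \<eta> (r k)) \<longlonglongrightarrow> fst (snd (snd l))"
    using tendsto_fst[OF tendsto_snd[OF tendsto_snd[OF lim]]] by (simp add: o_def F_def)
  have limE': "(\<lambda>k. \<eta>' (r k)) \<longlonglongrightarrow> snd (snd (snd l))"
    using tendsto_snd[OF tendsto_snd[OF tendsto_snd[OF lim]]] by (simp add: o_def F_def)
  obtain N1 where N1: "\<And>k. k \<ge> N1 \<Longrightarrow> U (r k) = U (r N1)"
    using int_conv_const[OF limU] by blast
  obtain N2 where N2: "\<And>k. k \<ge> N2 \<Longrightarrow> G (r k) = G (r N2)"
    using int_conv_const[OF limG] by blast
  define N0 where "N0 = max N1 N2"
  define u0 where "u0 = U (r N0)"
  define g0 where "g0 = G (r N0)"
  have UG0: "U (r k) = u0" "G (r k) = g0" if "k \<ge> N0" for k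
    using N1[of k] N1[of N0] N2[of k] N2[of N0] that unfolding u0_def g0_def N0_def by auto
  define e0 where "e0 = fst (snd (snd l))"
  define e1 where "e1 = snd (snd (snd l))"
  have rk: "k \<le> r k" for k using seq_suble[OF r] .
  have diff0: "\<bar>e0 - e1\<bar> \<ge> 1 / KK"
    using LIMSEQ_le_const[OF tendsto_rabs[OF tendsto_diff[OF limE limE']]] diffb
    unfolding e0_def e1_def by blast
  have key: "\<exists>N. \<forall>k\<ge>N. lamr n \<xi> (s*Aa (r k) + t*Cc (r k)) (s*Bb (r k) + t*Dd (r k)) < \<alpha> + \<delta>
                  \<and> s*Bb (r k) + t*Dd (r k) \<noteq> 0"
    if st: "(s,t) \<noteq> (0,0)" and dpos: "\<delta> > 0" for s t \<delta>
  proof -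
    obtain \<epsilon> where e: "\<epsilon> > 0" and U': "\<And>x y. y > 0 \<Longrightarrow> \<bar>real_of_int x / real_of_int y - \<xi>\<bar> < \<epsilon> \<Longrightarrow>
            lamr n \<xi> x y < \<alpha> + \<delta>"
      using lam_upper[OF irr la dpos] by blast
    define m where "m = min \<epsilon> 1"
    have mpos: "m > 0" unfolding m_def using e by simp
    define W where "W = (\<bar>real_of_int s\<bar> + \<bar>real_of_int t\<bar>*KK)*KK"
    have W0: "W \<ge> 0" unfolding W_def using KKpos by simp
    obtain N where N: "W / m < real N" using reals_Archimedean2 by blast
    show ?thesis
    proof (intro exI[of _ N] allI impI)
      fix k assume kN: "k \<ge> N"
      define j where "j = r k"
      define L where "L = real_of_int (s*Aa j + t*Cc j) - real_of_int (s*Bb j + t*Dd j) * \<xi>"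
      have Leq: "L = real_of_int s * Af j + real_of_int t * (real_of_int (Cc j) - real_of_int (Dd j) * \<xi>)"
        unfolding L_def Af_def by (simp add: algebra_simps)
      have "\<bar>L\<bar> \<le> \<bar>real_of_int s\<bar> * \<bar>Af j\<bar> + \<bar>real_of_int t\<bar> * (KK * \<bar>Af j\<bar>)"
      proof -
        have "\<bar>L\<bar> \<le> \<bar>real_of_int s * Af j\<bar> + \<bar>real_of_int t * (real_of_int (Cc j) - real_of_int (Dd j) * \<xi>)\<bar>"
          unfolding Leq by (rule abs_triangle_ineq)
        also have "\<dots> = \<bar>real_of_int s\<bar> * \<bar>Af j\<bar> + \<bar>real_of_int t\<bar> * \<bar>real_of_int (Cc j) - real_of_int (Dd j) * \<xi>\<bar>"
          by (simp add: abs_mult)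
        also have "\<dots> \<le> \<bar>real_of_int s\<bar> * \<bar>Af j\<bar> + \<bar>real_of_int t\<bar> * (KK * \<bar>Af j\<bar>)"
          using Cb[of j] unfolding Af_def by (intro add_left_mono mult_left_mono) auto
        finally show ?thesis .
      qed
      also have "\<dots> = (\<bar>real_of_int s\<bar> + \<bar>real_of_int t\<bar>*KK) * \<bar>Af j\<bar>" by (simp add: algebra_simps)
      also have "\<dots> \<le> (\<bar>real_of_int s\<bar> + \<bar>real_of_int t\<bar>*KK) * (KK / real_of_int (Y j))"
        using Ab1[of j] KKpos unfolding Af_def by (intro mult_left_mono) auto
      also have "\<dots> = W / real_of_int (Y j)" unfolding W_def by simp
      also have "\<dots> < m"
      proof -
        have "real_of_int (Y j) > real N"
        proof -
          have "Y j > int j" using Ypos .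
          moreover have "j \<ge> N" unfolding j_def using rk[of k] kN by simp
          ultimately show ?thesis by linarith
        qed
        then have "W / m < real_of_int (Y j)" using N by linarith
        then have "W < m * real_of_int (Y j)" using mpos by (simp add: field_simps)
        then show ?thesis using Yp[of j] by (simp add: field_simps)
      qed
      finally have Lm: "\<bar>L\<bar> < min \<epsilon> 1" unfolding m_def .
      have nz: "(s*Aa j + t*Cc j, s*Bb j + t*Dd j) \<noteq> (0,0)" using pair_nz[OF det[of j] st] .
      show "lamr n \<xi> (s*Aa (r k) + t*Cc (r k)) (s*Bb (r k) + t*Dd (r k)) < \<alpha> + \<delta>
                  \<and> s*Bb (r k) + t*Dd (r k) \<noteq> 0"
        using lamr_small[OF irr U' nz Lm[unfolded L_def]] unfolding j_def by blast
    qed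
  qed
  define Rs where "Rs s t k = real_of_int (gcd t (int n)) * \<bar>\<eta> (r k) - \<eta>' (r k)\<bar> /
           (\<bar>real_of_int s - real_of_int t * \<eta> (r k)\<bar> * \<bar>real_of_int s - real_of_int t * \<eta>' (r k)\<bar>)" for s t k
  have lim_st: "\<exists>R0. Rs s t \<longlonglongrightarrow> R0 \<and> mu_term n e0 e1 s t = ereal R0 \<and> R0 \<le> \<alpha>"
    if st: "(s,t) \<noteq> (0,0)" for s t
  proof -
    define Ds where "Ds k = \<bar>real_of_int s - real_of_int t * \<eta> (r k)\<bar> * \<bar>real_of_int s - real_of_int t * \<eta>' (r k)\<bar>" for k
    define D0 where "D0 = \<bar>real_of_int s - real_of_int t * e0\<bar> * \<bar>real_of_int s - real_of_int t * e1\<bar>"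
    define nm where "nm k = real_of_int (gcd t (int n)) * \<bar>\<eta> (r k) - \<eta>' (r k)\<bar>" for k
    define nm0 where "nm0 = real_of_int (gcd t (int n)) * \<bar>e0 - e1\<bar>"
    have limD: "Ds \<longlonglongrightarrow> D0" unfolding Ds_def D0_def e0_def e1_def
      by (intro tendsto_intros limE limE')
    have limN: "nm \<longlonglongrightarrow> nm0" unfolding nm_def nm0_def e0_def e1_def
      by (intro tendsto_intros limE limE')
    have gt1: "real_of_int (gcd t (int n)) \<ge> 1"
    proof -
      have "gcd t (int n) > 0" using n by simp
      then show ?thesis by linarith
    qed
    have nmb: "nm k \<ge> 1/KK" for k
    proof -
      have "1/KK \<le> \<bar>\<eta> (r k) - \<eta>' (r k)\<bar>" using diffb .
      also have "\<dots> \<le> nm k" unfolding nm_def using gt1 by (simp add: mult_le_cancel_right1)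
      finally show ?thesis .
    qed
    have RsE: "Rs s t k = nm k / Ds k" for k unfolding Rs_def nm_def Ds_def ..
    have RsL: "Rs s t k = lamr n \<xi> (s*Aa (r k) + t*Cc (r k)) (s*Bb (r k) + t*Dd (r k))" for k
      unfolding Rs_def using TR1 .
    obtain N where N: "\<And>k. k \<ge> N \<Longrightarrow> lamr n \<xi> (s*Aa (r k) + t*Cc (r k)) (s*Bb (r k) + t*Dd (r k)) < \<alpha> + 1
                  \<and> s*Bb (r k) + t*Dd (r k) \<noteq> 0"
      using key[OF st, of 1] by auto
    define c0 where "c0 = (1/KK)/(\<alpha>+1)"
    have c0pos: "c0 > 0" unfolding c0_def using KKpos a1 by simp
    have Dlow: "Ds k \<ge> c0" if k: "k \<ge> N" for k
    proof -
      have Rpos: "Rs s t k > 0" unfolding RsL using lamr_pos[OF irr n] N[OF k] by blast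
      have Rlt: "Rs s t k < \<alpha> + 1" unfolding RsL using N[OF k] by blast
      have Dne: "Ds k \<noteq> 0" using Rpos unfolding RsE by auto
      have Dp: "Ds k > 0" using Dne unfolding Ds_def by simp
      have "nm k < (\<alpha>+1) * Ds k" using Rlt Dp unfolding RsE by (simp add: field_simps)
      then have "nm k / (\<alpha>+1) < Ds k" using a1 by (simp add: field_simps)
      moreover have "c0 \<le> nm k / (\<alpha>+1)" unfolding c0_def using nmb[of k] a1
        by (intro divide_right_mono) auto
      ultimately show ?thesis by simp
    qed
    have D0low: "D0 \<ge> c0" using LIMSEQ_le_const[OF limD] Dlow by blast
    then have D0ne: "D0 \<noteq> 0" using c0pos by simp
    define R0 where "R0 = nm0 / D0"
    have limR: "Rs s t \<longlonglongrightarrow> R0" unfolding R0_def RsE[abs_def]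
      using tendsto_divide[OF limN limD D0ne] .
    have "R0 \<le> \<alpha> + \<delta>" if dpos: "\<delta> > 0" for \<delta>
    proof -
      obtain N' where N': "\<And>k. k \<ge> N' \<Longrightarrow> lamr n \<xi> (s*Aa (r k) + t*Cc (r k)) (s*Bb (r k) + t*Dd (r k)) < \<alpha> + \<delta>"
        using key[OF st dpos] by auto
      show ?thesis
        by (rule LIMSEQ_le_const2[OF limR]) (use N' RsL less_imp_le in metis)
    qed
    then have "R0 \<le> \<alpha>" by (rule field_le_epsilon)
    moreover have "mu_term n e0 e1 s t = ereal R0"
      unfolding mu_term_def Let_def D0_def[symmetric] R0_def nm0_def using D0ne by simp
    ultimately show ?thesis using limR by blast
  qed
  have g0pos: "g0 \<ge> 1" unfolding g0_def using Gn by simp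
  have e_nz: "(u0, g0) \<noteq> (0,0)" using g0pos by simp
  obtain R0 where R0: "Rs u0 g0 \<longlonglongrightarrow> R0" "mu_term n e0 e1 u0 g0 = ereal R0" "R0 \<le> \<alpha>"
    using lim_st[OF e_nz] by blast
  have "\<alpha> \<le> R0 + \<delta>" if dpos: "\<delta> > 0" for \<delta>
  proof -
    obtain N' :: nat where N': "1/\<delta> < real N'" using reals_Archimedean2 by blast
    have "\<alpha> - \<delta> \<le> Rs u0 g0 k" if k: "k \<ge> max N0 N'" for k
    proof -
      have "Rs u0 g0 k = lamr n \<xi> (u0*Aa (r k) + g0*Cc (r k)) (u0*Bb (r k) + g0*Dd (r k))"
        unfolding Rs_def using TR1 .
      also have "\<dots> = lamr n \<xi> (X (r k)) (Y (r k))"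
        using eX[of "r k"] eY[of "r k"] UG0[of k] k by simp
      finally have Req: "Rs u0 g0 k = lamr n \<xi> (X (r k)) (Y (r k))" .
      have "real (r k) \<ge> real N'" using rk[of k] k by simp
      then have "1/\<delta> < real (r k) + 2" using N' by linarith
      then have "1/(real (r k) + 2) < \<delta>" using dpos by (simp add: field_simps)
      then show ?thesis using Req lamX[of "r k"] by linarith
    qed
    then have "\<alpha> - \<delta> \<le> R0" using LIMSEQ_le_const[OF R0(1)] by blast
    then show ?thesis by simp
  qed
  then have "\<alpha> \<le> R0" by (rule field_le_epsilon)
  then have Req: "R0 = \<alpha>" using R0(3) by simp
  have mu_le: "mu_n n e0 e1 \<le> ereal \<alpha>" unfolding mu_n_def
  proof (rule SUP_least)
    fix p :: "int \<times> int" assume "p \<in> {p. p \<noteq> (0,0)}"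
    then have "(fst p, snd p) \<noteq> (0,0)" by simp
    then obtain R where "mu_term n e0 e1 (fst p) (snd p) = ereal R" "R \<le> \<alpha>" using lim_st by blast
    then show "mu_term n e0 e1 (fst p) (snd p) \<le> ereal \<alpha>" by simp
  qed
  have mu_ge: "mu_term n e0 e1 u0 g0 \<le> mu_n n e0 e1" unfolding mu_n_def
    using SUP_upper[of "(u0,g0)" "{p. p \<noteq> (0,0)}" "\<lambda>p. mu_term n e0 e1 (fst p) (snd p)"] e_nz by simp
  have mu_eq: "mu_n n e0 e1 = ereal \<alpha>" using mu_le mu_ge R0(2) Req by simp
  have "e0 \<noteq> e1" using diff0 KKpos by auto
  then show ?thesis using mu_eq R0(2) Req e_nz by (intro exI[of _ e0] exI[of _ e1]) auto
qed


theorem proposition3p4: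
  fixes n :: nat
  assumes "n > 0"
  shows "L_n n \<subseteq> M_n n \<and>
    (\<forall>\<alpha>\<in>L_n n. \<exists>\<xi> \<xi>'. \<xi> \<noteq> \<xi>' \<and> mu_n n \<xi> \<xi>' = ereal \<alpha> \<and>
        (\<exists>s t. (s, t) \<noteq> (0, 0) \<and> mu_term n \<xi> \<xi>' s t = mu_n n \<xi> \<xi>'))"
proof -
  have A: "\<forall>\<alpha>\<in>L_n n. \<exists>\<xi> \<xi>'. \<xi> \<noteq> \<xi>' \<and> mu_n n \<xi> \<xi>' = ereal \<alpha> \<and>
        (\<exists>s t. (s, t) \<noteq> (0, 0) \<and> mu_term n \<xi> \<xi>' s t = mu_n n \<xi> \<xi>')"
  proof
    fix \<alpha> assume "\<alpha> \<in> L_n n"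
    then obtain \<xi> where "\<xi> \<notin> \<rat>" "lambda_n n \<xi> = ereal \<alpha>" unfolding L_n_def by blast
    then show "\<exists>\<xi> \<xi>'. \<xi> \<noteq> \<xi>' \<and> mu_n n \<xi> \<xi>' = ereal \<alpha> \<and>
        (\<exists>s t. (s, t) \<noteq> (0, 0) \<and> mu_term n \<xi> \<xi>' s t = mu_n n \<xi> \<xi>')"
      using main_real[OF assms] by blast
  qed
  moreover have "L_n n \<subseteq> M_n n" using A unfolding M_n_def by blast
  ultimately show ?thesis by blast
qed

end
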